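(* Let $d \ge 1$, let $\mathcal{X}$ be a normed space (e.g. $\mathbb{R}^{w\times h\times c}$), and let $G:\mathbb{R}^d\to\mathcal{X}$ be a fixed (pre-trained generator) function. Fix constants $L \ge 0$, $\epsilon>0$ and $\epsilon'>\epsilon$. For each $n\ge 1$, let $\mathbf{z}^{(1)},\dots,\mathbf{z}^{(n)}$ be i.i.d. samples from the standard Gaussian $\mathcal{N}(0, I_d)$, and let $\mathbf{z}\sim\mathcal{N}(0,I_d)$ be independent of them. Let $I_n:\mathcal{X}\to\mathbb{R}^d$ be an inverter function (which may depend on $\mathbf{z}^{(1)},\dots,\mathbf{z}^{(n)}$ but not on $\mathbf{z}$) such that the composite $I_n\circ G:\mathbb{R}^d\to\mathbb{R}^d$ is $L$-Lipschitz and $$\|I_n(G(\mathbf{z}^{(i)}))-\mathbf{z}^{(i)}\|<\epsilon \quad \text{for all } i\in\{1,\dots,n\}.$$ Then $$\Pr\big(\|I_n(G(\mathbf{z}))-\mathbf{z}\|<\epsilon'\big)=1-o(1)\quad\text{as } n\to\infty,$$ where the probability is over $(\mathbf{z}^{(1)},\dots,\mathbf{z}^{(n)},\mathbf{z})$. That is, with high probability $I_n$ approximately inverts $G$ on a fresh latent sample.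
   Context: Norms on $\mathbb{R}^d$ are Euclidean. The Lipschitz constant $L$ is a fixed constant not depending on $n$. $\mathcal{N}(0,I_d)$ denotes the standard $d$-dimensional Gaussian distribution. *)

theory Defs
  imports "HOL-Probability.Probability"
begin

definition std_gaussian :: "(real ^ 'd) measure" where
  "std_gaussian = distr (PiM (UNIV :: 'd set) (\<lambda>_. density lborel std_normal_density))
                        borel (\<lambda>f. \<chi> i. f i)"

text \<open>Joint law of n i.i.d. samples (indexed 0..n-1) and an independent fresh sample.\<close>
definition sample_space :: "nat \<Rightarrow> ((nat \<Rightarrow> real ^ 'd) \<times> (real ^ 'd)) measure" where
  "sample_space n = PiM {..<n} (\<lambda>_. std_gaussian) \<Otimes>\<^sub>M std_gaussian"

end

theory Submission imports Defs begin


definition N1 :: "real measure" where "N1 = density lborel std_normal_density"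

lemma N1_prob: "prob_space N1" unfolding N1_def by (rule prob_space_normal_density) simp
lemma sets_N1[simp]: "sets N1 = sets borel" by (simp add: N1_def)
lemma space_N1[simp]: "space N1 = UNIV" by (simp add: N1_def)

lemma vec_meas: "(\<lambda>f. \<chi> i. f i) \<in> measurable (PiM (UNIV :: 'd::finite set) (\<lambda>_. N1)) (borel :: (real^'d) measure)"
proof -
  have "(\<lambda>f. (\<chi> i. f i) \<bullet> b) \<in> borel_measurable (PiM (UNIV :: 'd::finite set) (\<lambda>_. N1))"
    if "b \<in> Basis" for b :: "real^'d"
  proof -
    from that obtain j where b: "b = axis j 1" by (auto simp: Basis_vec_def)
    have m1: "(\<lambda>f. f j) \<in> measurable (PiM (UNIV :: 'd::finite set) (\<lambda>_. N1)) N1"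
      by (rule measurable_component_singleton) simp
    have m2: "(\<lambda>f. f j) \<in> borel_measurable (PiM (UNIV :: 'd::finite set) (\<lambda>_. N1))"
      using m1 unfolding measurable_cong_sets[OF refl sets_N1] .
    have eq: "(\<lambda>f. (\<chi> i. f i) \<bullet> b) = (\<lambda>f. f j)"
      by (simp only: b fun_eq_iff cart_eq_inner_axis[symmetric] vec_lambda_beta) simp
    show ?thesis unfolding eq by (rule m2)
  qed
  then show ?thesis by (subst borel_measurable_euclidean_space) blast
qed

lemma std_gaussian_alt: "std_gaussian = distr (PiM UNIV (\<lambda>_. N1)) borel (\<lambda>f. \<chi> i. f i)"
  by (simp add: std_gaussian_def N1_def)

lemma prob_S: "prob_space (std_gaussian :: (real^'d::finite) measure)"
proof -
  interpret P: prob_space "PiM (UNIV::'d set) (\<lambda>_. N1)" by (rule prob_space_PiM) (rule N1_prob)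
  show ?thesis unfolding std_gaussian_alt by (rule P.prob_space_distr[OF vec_meas])
qed

lemma sets_S[simp]: "sets std_gaussian = sets borel" by (simp add: std_gaussian_def)
lemma space_S[simp]: "space std_gaussian = UNIV" by (simp add: std_gaussian_def)


lemma N1_interval_pos:
  assumes "a < b" shows "emeasure N1 {a<..<b} \<noteq> 0"
proof
  assume 0: "emeasure N1 {a<..<b} = 0"
  have "emeasure N1 {a<..<b} = (\<integral>\<^sup>+ x. ennreal (std_normal_density x) * indicator {a<..<b} x \<partial>lborel)"
    unfolding N1_def by (subst emeasure_density) auto
  with 0 have "(\<integral>\<^sup>+ x. ennreal (std_normal_density x) * indicator {a<..<b} x \<partial>lborel) = 0"
    by simp
  then have "AE x in lborel. ennreal (std_normal_density x) * indicator {a<..<b} x = 0"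
    by (subst (asm) nn_integral_0_iff_AE) auto
  then have "AE x in lborel. x \<notin> {a<..<b}"
    by eventually_elim (auto simp: indicator_def std_normal_density_def split: if_splits)
  then have "emeasure lborel {a<..<b} = 0"
    by (subst (asm) AE_iff_measurable[of "{a<..<b}"]) auto
  with assms show False by simp
qed

lemma ball_pos:
  fixes z :: "real^'d::finite"
  assumes d: "\<delta> > 0" shows "emeasure std_gaussian (ball z \<delta>) \<noteq> 0"
proof -
  define r where "r = \<delta> / real CARD('d)"
  have r: "r > 0" using d by (simp add: r_def)
  let ?B = "PiE (UNIV::'d set) (\<lambda>i. {z$i - r <..< z$i + r})"
  interpret product_sigma_finite "\<lambda>_::'d. N1"
    by (simp add: product_sigma_finite_def prob_space_imp_sigma_finite N1_prob)
  have sub: "?B \<subseteq> (\<lambda>f. \<chi> i. f i) -` ball z \<delta> \<inter> space (PiM UNIV (\<lambda>_. N1))"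
  proof
    fix f assume f: "f \<in> ?B"
    have "dist z (\<chi> i. f i) = norm ((\<chi> i. f i) - z)" by (simp add: dist_norm norm_minus_commute)
    also have "\<dots> \<le> (\<Sum>i\<in>UNIV. \<bar>((\<chi> i. f i) - z)$i\<bar>)" by (rule norm_le_l1_cart)
    also have "\<dots> < (\<Sum>i\<in>(UNIV::'d set). r)"
      using f by (intro sum_strict_mono) (auto simp: PiE_iff abs_less_iff algebra_simps)
    also have "\<dots> = \<delta>" by (simp add: r_def)
    finally show "f \<in> (\<lambda>f. \<chi> i. f i) -` ball z \<delta> \<inter> space (PiM UNIV (\<lambda>_. N1))"
      by (simp add: space_PiM)
  qed
  have "emeasure (PiM UNIV (\<lambda>_. N1)) ?B = (\<Prod>i\<in>UNIV. emeasure N1 {z$i - r <..< z$i + r})"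
    by (rule emeasure_PiM) auto
  also have "\<dots> \<noteq> 0" using r by (simp add: prod_zero_iff N1_interval_pos)
  finally have B0: "emeasure (PiM UNIV (\<lambda>_. N1)) ?B \<noteq> 0" .
  have "emeasure (PiM UNIV (\<lambda>_. N1)) ?B \<le> emeasure (PiM UNIV (\<lambda>_. N1)) ((\<lambda>f. \<chi> i. f i) -` ball z \<delta> \<inter> space (PiM UNIV (\<lambda>_. N1)))"
    by (rule emeasure_mono[OF sub]) (intro measurable_sets[OF vec_meas], simp)
  also have "\<dots> = emeasure std_gaussian (ball z \<delta>)"
    unfolding std_gaussian_alt by (subst emeasure_distr[OF vec_meas]) auto
  finally show ?thesis using B0 by auto
qed


lemma q_meas:
  assumes d: "\<delta> > 0"
  shows "(\<lambda>z. measure (std_gaussian :: (real^'d::finite) measure) (ball z \<delta>)) \<in> borel_measurable std_gaussian"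
proof -
  interpret S: prob_space "std_gaussian :: (real^'d) measure" by (rule prob_S)
  have snd_m: "snd \<in> borel_measurable (std_gaussian \<Otimes>\<^sub>M (std_gaussian :: (real^'d) measure))"
    using measurable_snd measurable_cong_sets[OF refl sets_S] by blast
  have fst_m: "fst \<in> borel_measurable (std_gaussian \<Otimes>\<^sub>M (std_gaussian :: (real^'d) measure))"
    using measurable_fst measurable_cong_sets[OF refl sets_S] by blast
  have "{x \<in> space (std_gaussian \<Otimes>\<^sub>M std_gaussian). snd x \<in> ball (fst x) \<delta>} =
        {x \<in> space (std_gaussian \<Otimes>\<^sub>M (std_gaussian :: (real^'d) measure)). dist (fst x) (snd x) < \<delta>}"
    by (auto simp: mem_ball)
  also have "\<dots> \<in> sets (std_gaussian \<Otimes>\<^sub>M std_gaussian)"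
    using fst_m snd_m by measurable
  finally have "(\<lambda>z. emeasure (std_gaussian :: (real^'d) measure) (ball z \<delta>)) \<in> borel_measurable std_gaussian"
    by (intro S.measurable_emeasure) auto
  then show ?thesis unfolding measure_def by measurable
qed


lemma C_lemma:
  fixes n :: nat
  assumes d: "\<delta> > 0"
  defines "C \<equiv> {x \<in> space (sample_space n). \<forall>i\<in>{..<n}. \<delta> \<le> dist (fst x i) (snd x :: real^'d::finite)}"
  shows "C \<in> sets (sample_space n)"
    and "measure (sample_space n) C = (\<integral>z. (1 - measure std_gaussian (ball z \<delta>)) ^ n \<partial>(std_gaussian :: (real^'d) measure))"
proof -
  let ?S = "std_gaussian :: (real^'d) measure"
  let ?P = "PiM {..<n} (\<lambda>_. ?S)"
  interpret S: prob_space ?S by (rule prob_S)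
  interpret PS: product_prob_space "\<lambda>_. ?S" "{..<n}"
    by (simp add: product_prob_space_def product_prob_space_axioms_def product_sigma_finite_def
        prob_S prob_space_imp_sigma_finite)
  interpret FPS: finite_product_sigma_finite "\<lambda>_. ?S" "{..<n}"
    by (simp add: finite_product_sigma_finite_def finite_product_sigma_finite_axioms_def PS.product_sigma_finite_axioms)
  have Pp: "prob_space ?P" by (rule prob_space_PiM) (rule prob_S)
  interpret PSF: pair_sigma_finite ?P ?S
    by (simp add: pair_sigma_finite_def prob_space_imp_sigma_finite prob_S Pp)
  have ss: "sample_space n = ?P \<Otimes>\<^sub>M ?S" by (simp add: sample_space_def)
  have snd_m: "snd \<in> borel_measurable (?P \<Otimes>\<^sub>M ?S)"
    using measurable_snd measurable_cong_sets[OF refl sets_S] by blast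
  have fst_m: "(\<lambda>x. fst x i) \<in> borel_measurable (?P \<Otimes>\<^sub>M ?S)" if "i < n" for i
  proof -
    have a: "(\<lambda>f. f i) \<in> measurable ?P ?S"
      by (rule measurable_component_singleton) (use that in simp)
    have "(\<lambda>f. f i) \<in> borel_measurable ?P"
      using a measurable_cong_sets[OF refl sets_S] by blast
    then show ?thesis using measurable_fst by (rule measurable_compose[rotated])
  qed
  show Cs: "C \<in> sets (sample_space n)"
    unfolding C_def ss using fst_m snd_m by measurable
  define q where "q z = measure ?S (ball z \<delta>)" for z
  have qm: "q \<in> borel_measurable ?S" unfolding q_def by (rule q_meas[OF d])
  have hm: "(\<lambda>z. (1 - q z) ^ n) \<in> borel_measurable ?S" using qm by measurable
  have q01: "0 \<le> q z" "q z \<le> 1" for z unfolding q_def by (rule measure_nonneg, rule S.prob_le_1)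
  have slice: "(\<lambda>x. (x, z)) -` C = PiE {..<n} (\<lambda>_. space ?S - ball z \<delta>)" for z
  proof (rule set_eqI)
    fix x :: "nat \<Rightarrow> (real^'d)"
    have "x \<in> (\<lambda>x. (x, z)) -` C \<longleftrightarrow> x \<in> PiE {..<n} (\<lambda>_. UNIV) \<and> (\<forall>i\<in>{..<n}. \<delta> \<le> dist (x i) z)"
      unfolding C_def ss space_pair_measure space_PiM space_S by simp
    also have "\<dots> \<longleftrightarrow> x \<in> PiE {..<n} (\<lambda>_. space ?S - ball z \<delta>)"
      unfolding PiE_iff space_S mem_ball by (simp add: dist_commute not_less) blast
    finally show "x \<in> (\<lambda>x. (x, z)) -` C \<longleftrightarrow> x \<in> PiE {..<n} (\<lambda>_. space ?S - ball z \<delta>)" .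
  qed
  have sl: "emeasure ?P ((\<lambda>x. (x, z)) -` C) = ennreal ((1 - q z) ^ n)" for z
  proof -
    have "emeasure ?P ((\<lambda>x. (x, z)) -` C) = (\<Prod>i\<in>{..<n}. emeasure ?S (space ?S - ball z \<delta>))"
      unfolding slice by (rule FPS.measure_times) auto
    also have "\<dots> = (\<Prod>i\<in>{..<n}. ennreal (1 - q z))"
    proof -
      have c: "measure ?S (UNIV - ball z \<delta>) = 1 - measure ?S (ball z \<delta>)"
        using S.prob_compl[of "ball z \<delta>"] by simp
      show ?thesis by (simp add: S.emeasure_eq_measure c q_def)
    qed
    also have "\<dots> = ennreal ((1 - q z) ^ n)"
      using q01[of z] by (simp add: prod_ennreal ennreal_power)
    finally show ?thesis .
  qed
  have int: "integrable ?S (\<lambda>z. (1 - q z) ^ n)"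
    by (rule S.integrable_const_bound[where B=1]) (use q01 hm in \<open>auto simp: power_le_one\<close>)
  have "emeasure (sample_space n) C = (\<integral>\<^sup>+z. ennreal ((1 - q z) ^ n) \<partial>?S)"
    using Cs unfolding ss by (simp add: PSF.emeasure_pair_measure_alt2 sl)
  also have "\<dots> = ennreal (\<integral>z. (1 - q z) ^ n \<partial>?S)"
    by (rule nn_integral_eq_integral[OF int]) (use q01 in auto)
  finally have "emeasure (sample_space n) C = ennreal (\<integral>z. (1 - q z) ^ n \<partial>?S)" .
  moreover have "0 \<le> (\<integral>z. (1 - q z) ^ n \<partial>?S)"
    by (rule integral_nonneg_AE) (use q01 in auto)
  ultimately show "measure (sample_space n) C = (\<integral>z. (1 - measure std_gaussian (ball z \<delta>)) ^ n \<partial>?S)"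
    unfolding measure_def q_def by simp
qed



lemma snd_ss: "snd \<in> borel_measurable (sample_space n :: ((nat \<Rightarrow> (real^'d::finite)) \<times> (real^'d)) measure)"
  unfolding sample_space_def using measurable_snd measurable_cong_sets[OF refl sets_S] by blast

theorem theorem1:
  fixes G :: "real ^ 'd \<Rightarrow> 'x :: real_normed_vector"
    and Inv :: "nat \<Rightarrow> (nat \<Rightarrow> real ^ 'd) \<Rightarrow> 'x \<Rightarrow> real ^ 'd"
    and L \<epsilon> \<epsilon>' :: real
  assumes L: "L \<ge> 0" and eps: "\<epsilon> > 0" and eps': "\<epsilon>' > \<epsilon>"
    and meas: "\<And>n. n \<ge> 1 \<Longrightarrow>
       (\<lambda>(zs, z). Inv n zs (G z)) \<in> borel_measurable (sample_space n)"
    and lip: "\<And>n zs. n \<ge> 1 \<Longrightarrow> zs \<in> space (PiM {..<n} (\<lambda>_. std_gaussian)) \<Longrightarrow>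
       L-lipschitz_on UNIV (Inv n zs \<circ> G)"
    and fit: "\<And>n zs i. n \<ge> 1 \<Longrightarrow> zs \<in> space (PiM {..<n} (\<lambda>_. std_gaussian)) \<Longrightarrow>
       i < n \<Longrightarrow> norm (Inv n zs (G (zs i)) - zs i) < \<epsilon>"
  shows "(\<lambda>n. measure (sample_space n)
            {(zs, z) \<in> space (sample_space n). norm (Inv n zs (G z) - z) < \<epsilon>'})
         \<longlonglongrightarrow> 1"
  proof -
  let ?S = "std_gaussian :: (real^'d) measure"
  interpret S: prob_space ?S by (rule prob_S)
  define \<delta> where "\<delta> = (\<epsilon>' - \<epsilon>) / (L + 1)"
  have d: "\<delta> > 0" using L eps' by (simp add: \<delta>_def)
  have Ld: "\<epsilon> + (L + 1) * \<delta> = \<epsilon>'" using L by (simp add: \<delta>_def)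
  define q where "q z = measure ?S (ball z \<delta>)" for z
  have qm: "q \<in> borel_measurable ?S" unfolding q_def by (rule q_meas[OF d])
  have q01: "0 < q z" "q z \<le> 1" for z
  proof -
    have "emeasure ?S (ball z \<delta>) \<noteq> 0" by (rule ball_pos[OF d])
    then have "measure ?S (ball z \<delta>) \<noteq> 0" by (simp add: S.emeasure_eq_measure)
    then show "0 < q z" unfolding q_def using measure_nonneg[of ?S "ball z \<delta>"] by linarith
    show "q z \<le> 1" unfolding q_def by (rule S.prob_le_1)
  qed
  define C where "C n = {x \<in> space (sample_space n). \<forall>i\<in>{..<n}. \<delta> \<le> dist (fst x i) (snd x :: real^'d)}" for n
  define A where "A n = {(zs, z) \<in> space (sample_space n). norm (Inv n zs (G z) - z) < \<epsilon>'}" for n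
  have lim0: "(\<lambda>n. \<integral>z. (1 - q z) ^ n \<partial>?S) \<longlonglongrightarrow> (\<integral>z. 0 \<partial>?S)"
  proof (rule integral_dominated_convergence[where w="\<lambda>_. 1"])
    show "(\<lambda>x. 0::real) \<in> borel_measurable ?S" by simp
    show "(\<lambda>z. (1 - q z) ^ n) \<in> borel_measurable ?S" for n using qm by measurable
    show "integrable ?S (\<lambda>_. 1::real)" by simp
    show "AE z in ?S. (\<lambda>n. (1 - q z) ^ n) \<longlonglongrightarrow> 0"
      using q01 by (intro AE_I2 LIMSEQ_realpow_zero) (auto simp: less_le_not_le)
    show "AE z in ?S. norm ((1 - q z) ^ n) \<le> 1" for n
      using q01 by (intro AE_I2) (auto simp: power_le_one abs_le_iff less_imp_le)
  qed
  have Cm: "measure (sample_space n) (C n) = (\<integral>z. (1 - q z) ^ n \<partial>?S)" for n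
    using C_lemma(2)[OF d, of n] unfolding C_def q_def by simp
  have limC: "(\<lambda>n. 1 - measure (sample_space n) (C n)) \<longlonglongrightarrow> 1"
    using tendsto_diff[OF tendsto_const[of 1] lim0] by (simp add: Cm)
  have prob_M: "prob_space (sample_space n)" for n
    unfolding sample_space_def
    by (intro prob_space_pair prob_space_PiM prob_S)
  have bounds: "1 - measure (sample_space n) (C n) \<le> measure (sample_space n) (A n) \<and>
                measure (sample_space n) (A n) \<le> 1" if n1: "n \<ge> 1" for n
  proof -
    interpret M: prob_space "sample_space n" by (rule prob_M)
    have ss: "sample_space n = PiM {..<n} (\<lambda>_. ?S) \<Otimes>\<^sub>M ?S" by (simp add: sample_space_def)
    have snd_m: "(snd :: ((nat \<Rightarrow> (real^'d)) \<times> (real^'d)) \<Rightarrow> (real^'d)) \<in> borel_measurable (sample_space n)" by (rule snd_ss)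
    have f_m: "(\<lambda>x. Inv n (fst x) (G (snd x))) \<in> borel_measurable (sample_space n)"
      using meas[OF n1] by (simp add: case_prod_beta')
    have Aeq: "A n = {x \<in> space (sample_space n). norm (Inv n (fst x) (G (snd x)) - snd x) < \<epsilon>'}"
      unfolding A_def by auto
    have As: "A n \<in> sets (sample_space n)" unfolding Aeq using f_m snd_m by measurable
    have Cs: "C n \<in> sets (sample_space n)" unfolding C_def by (rule C_lemma(1)[OF d])
    have cover: "space (sample_space n) \<subseteq> A n \<union> C n"
    proof
      fix x :: "(nat \<Rightarrow> (real^'d)) \<times> (real^'d)" assume x: "x \<in> space (sample_space n)"
      obtain zs z where xz: "x = (zs, z)" by (cases x)
      have zs: "zs \<in> space (PiM {..<n} (\<lambda>_. ?S))" using x by (simp add: xz ss space_pair_measure)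
      show "x \<in> A n \<union> C n"
      proof (cases "\<forall>i\<in>{..<n}. \<delta> \<le> dist (zs i) z")
        case True then show ?thesis using x by (simp add: C_def xz)
      next
        case False
        then obtain i where i: "i < n" and di: "dist (zs i) z < \<delta>" by auto
        have lipI: "L-lipschitz_on UNIV (Inv n zs \<circ> G)" by (rule lip[OF n1 zs])
        have "dist ((Inv n zs \<circ> G) z) ((Inv n zs \<circ> G) (zs i)) \<le> L * dist z (zs i)"
          by (rule lipschitz_onD[OF lipI]) auto
        then have l1: "norm (Inv n zs (G z) - Inv n zs (G (zs i))) \<le> L * dist (zs i) z"
          by (simp add: dist_norm norm_minus_commute)
        have l2: "norm (Inv n zs (G (zs i)) - zs i) < \<epsilon>" by (rule fit[OF n1 zs i])
        have l3: "norm (zs i - z) < \<delta>" using di by (simp add: dist_norm)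
        define a where "a = Inv n zs (G z) - Inv n zs (G (zs i))"
        define b where "b = Inv n zs (G (zs i)) - zs i"
        define c where "c = zs i - z"
        have e: "Inv n zs (G z) - z = a + b + c"
          by (simp add: a_def b_def c_def)
        have t1: "norm (a + b + c) \<le> norm (a + b) + norm c" by (rule norm_triangle_ineq)
        have t2: "norm (a + b) \<le> norm a + norm b" by (rule norm_triangle_ineq)
        have "norm (Inv n zs (G z) - z) \<le> norm (Inv n zs (G z) - Inv n zs (G (zs i))) + norm (Inv n zs (G (zs i)) - zs i) + norm (zs i - z)"
          unfolding e using t1 t2 by (simp add: a_def b_def c_def)
        also have "\<dots> < L * \<delta> + \<epsilon> + \<delta>"
          using l1 l2 l3 mult_left_mono[OF less_imp_le[OF di] L] by linarith
        also have "\<dots> = \<epsilon>'" using Ld by (simp add: algebra_simps)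
        finally show ?thesis using x by (simp add: A_def xz)
      qed
    qed
    have "1 = measure (sample_space n) (space (sample_space n) :: ((nat \<Rightarrow> (real^'d)) \<times> (real^'d)) set)"
      using M.prob_space by simp
    also have "\<dots> \<le> measure (sample_space n) (A n \<union> C n)"
      using cover As Cs by (intro M.finite_measure_mono) auto
    also have "\<dots> \<le> measure (sample_space n) (A n) + measure (sample_space n) (C n)"
      using As Cs by (rule measure_Un_le)
    finally show ?thesis by auto
  qed
  have "(\<lambda>n. measure (sample_space n) (A n)) \<longlonglongrightarrow> 1"
  proof (rule tendsto_sandwich[OF _ _ limC tendsto_const])
    show "eventually (\<lambda>n. 1 - measure (sample_space n) (C n) \<le> measure (sample_space n) (A n)) sequentially"
      using bounds by (intro eventually_sequentiallyI[of 1]) auto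
    show "eventually (\<lambda>n. measure (sample_space n) (A n) \<le> 1) sequentially"
      using bounds by (intro eventually_sequentiallyI[of 1]) auto
  qed
  then show ?thesis by (simp add: A_def)
qed

end
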